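(* Let $\{W_t\}_{t\ge0}$ be a standard Brownian motion and let $\{\phi_s\}_{s\ge0}$ be a deterministic function (the functional model parameter). For an initial term-structure density $\{\rho_s\}_{s\ge0}$ ($\rho_s=-\partial_sP_{0s}>0$, $\int_0^\infty\rho_s\,\mathrm ds=1$), consider the Flesaker–Hughston model based on the GBM family $M_{ts}=\exp(\phi_sW_t-\tfrac12\phi_s^2t)$, with bond prices $$P_{tT}=\frac{\int_T^\infty\rho_s\exp(\phi_sW_t-\frac12\phi_s^2t)\,\mathrm ds}{\int_t^\infty\rho_s\exp(\phi_sW_t-\frac12\phi_s^2t)\,\mathrm ds},$$ and define $$\Phi_{tT}=\frac{\int_T^\infty\phi_s\rho_s\exp(\phi_sW_t-\frac12\phi_s^2t)\,\mathrm ds}{\int_T^\infty\rho_s\exp(\phi_sW_t-\frac12\phi_s^2t)\,\mathrm ds},\qquad \Phi_{tt}=\lim_{s\to t}\Phi_{st},$$ the bond volatility $\Omega_{tT}=\Phi_{tT}-\Phi_{tt}$, the market price of risk $\lambda_t=-\Phi_{tt}$, and the risk premium $\lambda_t\Omega_{tT}=\Phi_{tt}(\Phi_{tt}-\Phi_{tT})$. Assume that for any admissible initial term-structure density $\{\rho_s\}$ the risk premium is positive for all $0\le t<T$. Then $\{\phi_t\}$ must be either positive and decreasing, or negative and increasing.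
   Context: An admissible initial term-structure density is a function $\rho_s=-\partial_sP_{0s}$ arising from an initial discount bond curve $\{P_{0s}\}$ with positive initial interest rates and $\lim_{s\to\infty}P_{0s}=0$; thus $\rho_s>0$ and $\int_0^\infty\rho_s\,\mathrm ds=1$. *)

theory Defs
  imports "HOL-Analysis.Analysis"
begin

definition admissible_density :: "(real \<Rightarrow> real) \<Rightarrow> bool" where
  "admissible_density \<rho> \<longleftrightarrow>
     (\<exists>P :: real \<Rightarrow> real.
        P 0 = 1 \<and>
        (\<forall>s\<ge>0. (P has_real_derivative - \<rho> s) (at s within {0..})) \<and>
        (\<forall>s\<ge>0. \<rho> s > 0) \<and>
        (P \<longlongrightarrow> 0) at_top)"

text \<open>GBM family M_{ts} = exp(phi_s W_t - phi_s^2 t / 2), with W_t = w.\<close>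
definition gbmM :: "(real \<Rightarrow> real) \<Rightarrow> real \<Rightarrow> real \<Rightarrow> real \<Rightarrow> real" where
  "gbmM \<phi> t w s = exp (\<phi> s * w - (\<phi> s)\<^sup>2 * t / 2)"

definition bondP :: "(real \<Rightarrow> real) \<Rightarrow> (real \<Rightarrow> real) \<Rightarrow> real \<Rightarrow> real \<Rightarrow> real \<Rightarrow> real" where
  "bondP \<phi> \<rho> t w T =
     integral {T..} (\<lambda>s. \<rho> s * gbmM \<phi> t w s) / integral {t..} (\<lambda>s. \<rho> s * gbmM \<phi> t w s)"

definition PhiFH :: "(real \<Rightarrow> real) \<Rightarrow> (real \<Rightarrow> real) \<Rightarrow> real \<Rightarrow> real \<Rightarrow> real \<Rightarrow> real" where
  "PhiFH \<phi> \<rho> t w T =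
     integral {T..} (\<lambda>s. \<phi> s * \<rho> s * gbmM \<phi> t w s) / integral {T..} (\<lambda>s. \<rho> s * gbmM \<phi> t w s)"

text \<open>Bond volatility, market price of risk and risk premium (Phi_{tt} = PhiFH at T = t).\<close>
definition bond_vol where
  "bond_vol \<phi> \<rho> t w T = PhiFH \<phi> \<rho> t w T - PhiFH \<phi> \<rho> t w t"

definition mpr where
  "mpr \<phi> \<rho> t w = - PhiFH \<phi> \<rho> t w t"

definition risk_premium where
  "risk_premium \<phi> \<rho> t w T = mpr \<phi> \<rho> t w * bond_vol \<phi> \<rho> t w T"

definition model_wd :: "(real \<Rightarrow> real) \<Rightarrow> (real \<Rightarrow> real) \<Rightarrow> real \<Rightarrow> real \<Rightarrow> bool" where
  "model_wd \<phi> \<rho> t w \<longleftrightarrow>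
     (\<lambda>s. \<rho> s * gbmM \<phi> t w s) absolutely_integrable_on {t..} \<and>
     (\<lambda>s. \<phi> s * \<rho> s * gbmM \<phi> t w s) absolutely_integrable_on {t..}"

end

theory Submission imports Defs begin

lemma expint: "(\<lambda>s::real. M * exp (-s)) integrable_on {x..}"
proof -
  have "(\<lambda>s. exp (- (1::real) * s)) integrable_on {x..}" by (rule integrable_on_exp_minus_to_infinity) simp
  then show ?thesis using integrable_on_cmult_left[of "\<lambda>s. exp (-s)" "{x..}" M] by simp
qed

lemma L1:
  fixes f :: "real \<Rightarrow> real"
  assumes "continuous_on {x..} f" "\<And>s. s \<ge> x \<Longrightarrow> \<bar>f s\<bar> \<le> M * exp (-s)"
  shows "f absolutely_integrable_on {x..}"
proof (rule measurable_bounded_by_integrable_imp_absolutely_integrable)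
  show "{x..} \<in> sets lebesgue" by simp
  show "f \<in> borel_measurable (lebesgue_on {x..})"
    using assms(1) by (rule continuous_imp_measurable_on_sets_lebesgue) simp
  show "(\<lambda>s::real. M * exp (-s)) integrable_on {x..}" by (rule expint)
qed (use assms in auto)

lemma L2:
  fixes f :: "real \<Rightarrow> real"
  assumes "continuous_on {x..y} f" "x < y" "\<And>s. s \<in> {x..y} \<Longrightarrow> f s > 0"
  shows "integral {x..y} f > 0"
proof -
  obtain z where z: "z \<in> {x..y}" "\<And>s. s \<in> {x..y} \<Longrightarrow> f z \<le> f s"
    using continuous_attains_inf[of "{x..y}" f] assms by auto
  have "integral {x..y} (\<lambda>s. f z) \<le> integral {x..y} f"
    by (rule integral_le) (use assms z in \<open>auto intro: integrable_continuous_interval\<close>)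
  moreover have "integral {x..y} (\<lambda>s. f z) = f z * (y - x)" using assms by simp
  moreover have "f z * (y - x) > 0" using assms z by simp
  ultimately show ?thesis by linarith
qed


lemma split_int:
  fixes f :: "real \<Rightarrow> real"
  assumes "a \<le> T" "f integrable_on {a..T}" "f integrable_on {T..}"
  shows "integral {a..} f = integral {a..T} f + integral {T..} f"
proof -
  have "(f has_integral (integral {a..T} f + integral {T..} f)) ({a..T} \<union> {T..})"
    by (rule has_integral_Un) (use assms in \<open>auto simp: integrable_integral\<close>)
  moreover have "{a..T} \<union> {T..} = {a..}" using assms by auto
  ultimately show ?thesis by (simp add: integral_unique)
qed

lemma lin_int:
  fixes f g :: "real \<Rightarrow> real"
  assumes "f integrable_on S" "g integrable_on S"
  shows "integral S (\<lambda>s. (f s + c * g s) / Z) = (integral S f + c * integral S g) / Z"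
proof -
  have "integral S (\<lambda>s. (f s + c * g s) / Z) = integral S (\<lambda>s. f s + c * g s) / Z"
    by (simp add: integral_divide)
  also have "integral S (\<lambda>s. f s + c * g s) = integral S f + integral S (\<lambda>s. c * g s)"
    using assms by (intro integral_add integrable_on_mult_right) auto
  also have "integral S (\<lambda>s. c * g s) = c * integral S g" by simp
  finally show ?thesis .
qed

lemma gbm_neg: "gbmM (\<lambda>s. - \<phi> s) t w s = gbmM \<phi> t (-w) s"
  by (simp add: gbmM_def)

lemma Phi_neg: "PhiFH (\<lambda>s. - \<phi> s) \<rho> t w T = - PhiFH \<phi> \<rho> t (-w) T"
proof -
  have "(\<lambda>s. - \<phi> s * \<rho> s * gbmM (\<lambda>s. - \<phi> s) t w s) = (\<lambda>s. - (\<phi> s * \<rho> s * gbmM \<phi> t (-w) s))"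
    by (simp add: gbm_neg)
  moreover have "(\<lambda>s. \<rho> s * gbmM (\<lambda>s. - \<phi> s) t w s) = (\<lambda>s. \<rho> s * gbmM \<phi> t (-w) s)"
    by (simp add: gbm_neg)
  ultimately show ?thesis unfolding PhiFH_def by (simp only: integral_neg minus_divide_left)
qed

lemma rp_neg: "risk_premium (\<lambda>s. - \<phi> s) \<rho> t w T = risk_premium \<phi> \<rho> t (-w) T"
  unfolding risk_premium_def mpr_def bond_vol_def Phi_neg by (simp only: minus_minus mult_minus_left mult_minus_right minus_diff_minus)

lemma wd_neg: "model_wd (\<lambda>s. - \<phi> s) \<rho> t w = model_wd \<phi> \<rho> t (-w)"
proof -
  have eq: "(\<lambda>s. - \<phi> s * \<rho> s * gbmM (\<lambda>s. - \<phi> s) t w s) = (\<lambda>s. (-1::real) * (\<phi> s * \<rho> s * gbmM \<phi> t (-w) s))"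
    by (simp add: gbm_neg)
  have eq2: "(\<lambda>s. \<rho> s * gbmM (\<lambda>s. - \<phi> s) t w s) = (\<lambda>s. \<rho> s * gbmM \<phi> t (-w) s)"
    by (simp add: gbm_neg)
  show ?thesis unfolding model_wd_def eq eq2
    by (subst set_integrable_mult_right_iff) auto
qed

lemma prem_neg:
  assumes prem: "\<And>\<rho> t T w. admissible_density \<rho> \<Longrightarrow> 0 \<le> t \<Longrightarrow> t < T \<Longrightarrow>
                 model_wd \<phi> \<rho> t w \<Longrightarrow> risk_premium \<phi> \<rho> t w T > 0"
  shows "\<And>\<rho> t T w. admissible_density \<rho> \<Longrightarrow> 0 \<le> t \<Longrightarrow> t < T \<Longrightarrow>
                 model_wd (\<lambda>s. - \<phi> s) \<rho> t w \<Longrightarrow> risk_premium (\<lambda>s. - \<phi> s) \<rho> t w T > 0"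
  using prem by (simp add: rp_neg wd_neg)


lemma gbm0: "gbmM \<phi> a 0 s = exp (- ((\<phi> s)\<^sup>2 * a / 2))"
  by (simp add: gbmM_def)

lemma bnd:
  fixes a x :: real assumes "a > 0"
  shows "\<bar>x\<bar> * exp (- (x\<^sup>2 * a / 2)) \<le> 1 + 2 / a"
proof -
  let ?y = "x\<^sup>2 * a / 2"
  have y0: "?y \<ge> 0" using assms by simp
  have e1: "1 + ?y \<le> exp ?y" by (rule exp_ge_add_one_self)
  have q: "\<bar>x\<bar> \<le> 1 + x\<^sup>2"
  proof (cases "\<bar>x\<bar> \<le> 1")
    case True then show ?thesis using zero_le_power2[of "x"] by linarith
  next
    case False
    then have "\<bar>x\<bar> * 1 \<le> \<bar>x\<bar> * \<bar>x\<bar>" by (intro mult_left_mono) auto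
    then have "\<bar>x\<bar> \<le> x\<^sup>2" by (simp add: power2_eq_square)
    then show ?thesis by linarith
  qed
  have q2: "1 + x\<^sup>2 \<le> (1 + 2/a) * (1 + ?y)"
    using assms y0 by (simp add: field_simps)
  have "\<bar>x\<bar> \<le> (1 + 2/a) * exp ?y"
  proof -
    have "(1 + 2/a) * (1 + ?y) \<le> (1 + 2/a) * exp ?y" using e1 assms by (intro mult_left_mono) auto
    then show ?thesis using q q2 by linarith
  qed
  then have "\<bar>x\<bar> / exp ?y \<le> 1 + 2/a" by (simp add: divide_le_eq)
  moreover have "exp (- ?y) = 1 / exp ?y" by (simp add: exp_minus inverse_eq_divide)
  ultimately show ?thesis by simp
qed

lemma gbm_bounds:
  fixes a :: real assumes "a > 0"
  shows "0 < gbmM \<phi> a 0 s" "gbmM \<phi> a 0 s \<le> 1" "\<bar>\<phi> s\<bar> * gbmM \<phi> a 0 s \<le> 1 + 2 / a"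
proof -
  have y0: "(\<phi> s)\<^sup>2 * a / 2 \<ge> 0" using assms by simp
  show "0 < gbmM \<phi> a 0 s" unfolding gbm0 by simp
  show "gbmM \<phi> a 0 s \<le> 1" unfolding gbm0 using y0 by simp
  show "\<bar>\<phi> s\<bar> * gbmM \<phi> a 0 s \<le> 1 + 2 / a" unfolding gbm0 using bnd[OF assms] .
qed

lemma cont_gbm: "continuous_on S \<phi> \<Longrightarrow> continuous_on S (\<lambda>s. gbmM \<phi> a 0 s)"
  unfolding gbmM_def by (intro continuous_intros) auto


lemma core:
  fixes \<phi> :: "real \<Rightarrow> real" and a T b m :: real
  assumes cont: "continuous_on {0..} \<phi>"
    and prem: "\<And>\<rho> t T w. admissible_density \<rho> \<Longrightarrow> 0 \<le> t \<Longrightarrow> t < T \<Longrightarrow>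
                 model_wd \<phi> \<rho> t w \<Longrightarrow> risk_premium \<phi> \<rho> t w T > 0"
    and a: "0 < a" "a < T" "T < b" and m: "0 < m"
    and le: "\<And>x. a \<le> x \<Longrightarrow> x \<le> T \<Longrightarrow> \<phi> x \<le> m" and gt: "m < \<phi> b"
  shows False
proof -
  have b0: "b \<in> {0..}" using a by simp
  obtain \<delta> where \<delta>: "\<delta> > 0" "\<And>x. x \<in> {0..} \<Longrightarrow> dist x b < \<delta> \<Longrightarrow> dist (\<phi> x) (\<phi> b) < \<phi> b - m"
    using cont[unfolded continuous_on_iff, rule_format, OF b0, of "\<phi> b - m"] gt by auto
  define r where "r = min (\<delta>/2) ((b - T)/2)"
  have r1: "r \<le> \<delta>/2" "r \<le> (b - T)/2" unfolding r_def by (rule min.cobounded1, rule min.cobounded2)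
  have r0: "0 < r" using \<delta>(1) a unfolding r_def by simp
  have r: "0 < r" "T < b - r" "r < \<delta>" using r0 r1 \<delta>(1) a(3) by auto
  have \<phi>r: "m < \<phi> x" if "\<bar>x - b\<bar> \<le> r" for x
  proof -
    have "x \<in> {0..}" using that r a by auto
    moreover have "dist x b < \<delta>" using that r by (simp add: dist_real_def)
    ultimately have "dist (\<phi> x) (\<phi> b) < \<phi> b - m" by (rule \<delta>(2))
    then show ?thesis by (simp add: dist_real_def)
  qed
  define E where "E = (\<lambda>s. gbmM \<phi> a 0 s)"
  define e where "e = (\<lambda>s::real. exp (-s))"
  define \<beta> where "\<beta> = (\<lambda>s::real. max 0 (r - \<bar>s - b\<bar>))"
  define C where "C = 1 + 2/a"
  define B where "B = r * exp (b + r)"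
  have C0: "C > 0"
  proof -
    have "0 < 2/a" using a(1) by simp
    then show ?thesis unfolding C_def by linarith
  qed
  have B0: "B > 0" using r by (simp add: B_def)
  have E: "0 < E s" "E s \<le> 1" "\<bar>\<phi> s\<bar> * E s \<le> C" for s
    using gbm_bounds[OF a(1), of \<phi> s] by (auto simp: E_def C_def)
  have e0: "0 < e s" for s by (simp add: e_def)
  have En: "0 \<le> E s" for s using E(1)[of s] by simp
  have \<beta>0: "0 \<le> \<beta> s" for s by (simp add: \<beta>_def)
  have \<beta>B: "\<beta> s \<le> B * e s" for s
  proof (cases "\<bar>s - b\<bar> < r")
    case True
    then have "\<beta> s \<le> r" by (simp add: \<beta>_def)
    moreover have "1 \<le> exp (b + r) * exp (- s)"
      using True by (simp add: exp_add[symmetric])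
    then have "r \<le> r * (exp (b + r) * exp (- s))" using r by simp
    ultimately show ?thesis by (simp add: B_def e_def mult.assoc)
  next
    case False
    then have "\<beta> s = 0" by (simp add: \<beta>_def)
    then show ?thesis using B0 e0[of s] by simp
  qed
  have \<beta>z: "\<beta> s = 0" if "s \<le> T" for s using that r by (simp add: \<beta>_def)
  have \<beta>z2: "\<beta> s = 0" if "s \<ge> b + r" for s using that r by (simp add: \<beta>_def)
  have \<beta>pos: "\<beta> s \<ge> r/2" if "s \<in> {b - r/2..b + r/2}" for s
  proof -
    have "s - b \<le> r/2" "b - s \<le> r/2" using that by auto
    then have "\<bar>s - b\<bar> \<le> r/2" by (metis abs_le_iff minus_diff_eq)
    then have "r/2 \<le> r - \<bar>s - b\<bar>" by linarith
    then show ?thesis unfolding \<beta>_def by (rule order.trans[OF _ max.cobounded2])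
  qed
  have c\<phi>: "continuous_on S \<phi>" if "S \<subseteq> {0..}" for S by (rule continuous_on_subset[OF cont that])
  have cE: "continuous_on S E" if "S \<subseteq> {0..}" for S unfolding E_def by (rule cont_gbm[OF c\<phi>[OF that]])
  have ce: "continuous_on S e" for S unfolding e_def by (intro continuous_intros)
  have c\<beta>: "continuous_on S \<beta>" for S unfolding \<beta>_def by (intro continuous_intros)
  have intg: "f integrable_on {x..}" if "0 \<le> x" "continuous_on {x..} f" "\<And>s. s \<ge> x \<Longrightarrow> \<bar>f s\<bar> \<le> M * e s" for f x M
    using L1[of x f M] that by (auto simp: e_def absolutely_integrable_on_def)
  have sub: "{x..} \<subseteq> {0..}" "{x..y} \<subseteq> {0..}" if "0 \<le> x" for x y :: real using that by auto
  have i1: "(\<lambda>s. \<phi> s * e s * E s) integrable_on {x..}" if "0 \<le> x" for x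
  proof (rule intg[OF that, where M = C])
    show "continuous_on {x..} (\<lambda>s. \<phi> s * e s * E s)"
      by (intro continuous_intros c\<phi> cE ce sub that)
    fix s have "\<bar>\<phi> s * e s * E s\<bar> = (\<bar>\<phi> s\<bar> * E s) * e s" using E[of s] e0[of s] by (simp add: abs_mult)
    also have "\<dots> \<le> C * e s" using E[of s] e0[of s] by (intro mult_right_mono) auto
    finally show "\<bar>\<phi> s * e s * E s\<bar> \<le> C * e s" .
  qed
  have i2: "(\<lambda>s. e s * E s) integrable_on {x..}" if "0 \<le> x" for x
  proof (rule intg[OF that, where M = 1])
    show "continuous_on {x..} (\<lambda>s. e s * E s)"
      by (intro continuous_intros c\<phi> cE ce sub that)
    fix s show "\<bar>e s * E s\<bar> \<le> 1 * e s" using E[of s] e0[of s] by (simp add: abs_mult mult_left_le)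
  qed
  have i3: "(\<lambda>s. \<phi> s * \<beta> s * E s) integrable_on {x..}" if "0 \<le> x" for x
  proof (rule intg[OF that, where M = "C * B"])
    show "continuous_on {x..} (\<lambda>s. \<phi> s * \<beta> s * E s)"
      by (intro continuous_intros c\<phi> cE c\<beta> sub that)
    fix s have "\<bar>\<phi> s * \<beta> s * E s\<bar> = (\<bar>\<phi> s\<bar> * E s) * \<beta> s" using E[of s] \<beta>0[of s] by (simp add: abs_mult)
    also have "\<dots> \<le> C * (B * e s)" using E[of s] \<beta>0[of s] \<beta>B[of s] C0 by (intro mult_mono) auto
    finally show "\<bar>\<phi> s * \<beta> s * E s\<bar> \<le> C * B * e s" by (simp add: mult.assoc)
  qed
  have i4: "(\<lambda>s. \<beta> s * E s) integrable_on {x..}" if "0 \<le> x" for x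
  proof (rule intg[OF that, where M = B])
    show "continuous_on {x..} (\<lambda>s. \<beta> s * E s)"
      by (intro continuous_intros c\<phi> cE c\<beta> sub that)
    fix s have "\<bar>\<beta> s * E s\<bar> = \<beta> s * E s" using E[of s] \<beta>0[of s] by (simp add: abs_mult)
    also have "\<dots> \<le> \<beta> s" using E[of s] \<beta>0[of s] by (simp add: mult_left_le)
    finally show "\<bar>\<beta> s * E s\<bar> \<le> B * e s" using \<beta>B[of s] by linarith
  qed
  have ic: "f integrable_on {x..y}" if "continuous_on {x..y} f" for f :: "real \<Rightarrow> real" and x y :: real
    using that by (rule integrable_continuous_real)
  have a0: "0 \<le> a" "0 \<le> T" using a by auto
  have j1: "(\<lambda>s. \<phi> s * e s * E s) integrable_on {a..T}" "(\<lambda>s. e s * E s) integrable_on {a..T}"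
     "(\<lambda>s. \<phi> s * \<beta> s * E s) integrable_on {a..T}" "(\<lambda>s. \<beta> s * E s) integrable_on {a..T}"
    by (intro ic continuous_intros c\<phi> cE ce c\<beta> sub a0)+
  define X1 where "X1 = integral {a..T} (\<lambda>s. \<phi> s * e s * E s)"
  define Y1 where "Y1 = integral {a..T} (\<lambda>s. e s * E s)"
  define X2 where "X2 = integral {T..} (\<lambda>s. \<phi> s * e s * E s)"
  define Y2 where "Y2 = integral {T..} (\<lambda>s. e s * E s)"
  define Pb where "Pb = integral {T..} (\<lambda>s. \<phi> s * \<beta> s * E s)"
  define Qb where "Qb = integral {T..} (\<lambda>s. \<beta> s * E s)"
  have X1Y1: "X1 \<le> m * Y1"
  proof -
    have "X1 \<le> integral {a..T} (\<lambda>s. m * (e s * E s))" unfolding X1_def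
    proof (rule integral_le)
      show "(\<lambda>s. m * (e s * E s)) integrable_on {a..T}" using j1(2) by (rule integrable_on_mult_right)
      fix s assume "s \<in> {a..T}"
      then have "\<phi> s \<le> m" using le by auto
      then show "\<phi> s * e s * E s \<le> m * (e s * E s)" using E[of s] e0[of s]
        by (simp add: mult.assoc mult_right_mono)
    qed (rule j1(1))
    then show ?thesis by (simp add: Y1_def)
  qed
  have Y1: "Y1 > 0" unfolding Y1_def
    by (rule L2) (use a E e0 in \<open>auto intro!: continuous_intros c\<phi> cE ce sub\<close>)
  have Y2: "Y2 \<ge> 0" unfolding Y2_def
    by (rule integral_nonneg[OF i2[OF a0(2)]]) (use E e0 in \<open>auto intro: less_imp_le\<close>)
  have small: "0 < integral {b - r/2..b + r/2} f" if "continuous_on {b - r/2..b + r/2} f"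
      "\<And>s. s \<in> {b - r/2..b + r/2} \<Longrightarrow> 0 < f s" for f :: "real \<Rightarrow> real"
    by (rule L2) (use that r in auto)
  have sub2: "{b - r/2..b + r/2} \<subseteq> {T..}" using r by auto
  have sub3: "{b - r/2..b + r/2} \<subseteq> {0..}" using r a by auto
  have rb: "\<bar>s - b\<bar> \<le> r" if "s \<in> {b - r/2..b + r/2}" for s using that r by auto
  have Qb: "Qb > 0"
  proof -
    have "integral {b - r/2..b + r/2} (\<lambda>s. \<beta> s * E s) \<le> Qb" unfolding Qb_def
      by (rule integral_subset_le[OF sub2]) (use En \<beta>0 in \<open>auto intro!: ic continuous_intros cE c\<beta> sub3 i4 a0\<close>)
    moreover have "0 < integral {b - r/2..b + r/2} (\<lambda>s. \<beta> s * E s)"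
    proof (rule small)
      show "continuous_on {b - r/2..b + r/2} (\<lambda>s. \<beta> s * E s)" by (intro continuous_intros cE c\<beta> sub3)
      fix s assume "s \<in> {b - r/2..b + r/2}"
      then show "0 < \<beta> s * E s" using \<beta>pos[of s] E[of s] r by (auto intro!: mult_pos_pos)
    qed
    ultimately show ?thesis by linarith
  qed
  define K where "K = Pb - m * Qb"
  have K: "K > 0"
  proof -
    let ?f = "\<lambda>s. (\<phi> s - m) * \<beta> s * E s"
    have fi: "?f integrable_on {T..}"
    proof -
      have "(\<lambda>s. \<phi> s * \<beta> s * E s - m * (\<beta> s * E s)) integrable_on {T..}"
        by (intro integrable_diff integrable_on_mult_right i3 i4 a0)
      moreover have "(\<lambda>s. \<phi> s * \<beta> s * E s - m * (\<beta> s * E s)) = ?f" by (auto simp: algebra_simps)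
      ultimately show ?thesis by simp
    qed
    have Keq: "integral {T..} ?f = K"
    proof -
      have "(\<lambda>s. \<phi> s * \<beta> s * E s - m * (\<beta> s * E s)) = ?f" by (auto simp: algebra_simps)
      then have "integral {T..} ?f = integral {T..} (\<lambda>s. \<phi> s * \<beta> s * E s - m * (\<beta> s * E s))" by simp
      also have "\<dots> = Pb - m * Qb" unfolding Pb_def Qb_def
        by (subst integral_diff) (auto intro!: integrable_on_mult_right i3 i4 a0)
      finally show ?thesis by (simp add: K_def)
    qed
    have fnn: "0 \<le> ?f s" for s
    proof (cases "\<bar>s - b\<bar> < r")
      case True
      then have "m < \<phi> s" using \<phi>r by auto
      then show ?thesis using \<beta>0[of s] E[of s] by auto
    next
      case False
      then have "\<beta> s = 0" by (simp add: \<beta>_def)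
      then show ?thesis by simp
    qed
    have "integral {b - r/2..b + r/2} ?f \<le> integral {T..} ?f"
      by (rule integral_subset_le[OF sub2]) (use fnn fi in \<open>auto intro!: ic continuous_intros cE c\<beta> c\<phi> sub3\<close>)
    moreover have "0 < integral {b - r/2..b + r/2} ?f"
    proof (rule small)
      show "continuous_on {b - r/2..b + r/2} ?f" by (intro continuous_intros cE c\<beta> c\<phi> sub3)
      fix s assume s: "s \<in> {b - r/2..b + r/2}"
      then have "m < \<phi> s" using \<phi>r rb by auto
      then show "0 < ?f s" using \<beta>pos[OF s] E[of s] r by (auto intro!: mult_pos_pos)
    qed
    ultimately show ?thesis using Keq by linarith
  qed
  define c where "c = (\<bar>m * Y2 - X2\<bar> + \<bar>X1 + X2\<bar> + 1) / K"
  have cK: "c * K = \<bar>m * Y2 - X2\<bar> + \<bar>X1 + X2\<bar> + 1" using K by (simp add: c_def)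
  have c0: "c > 0" using K by (simp add: c_def)
  define I where "I = integral {0..b + r} \<beta>"
  have I0: "I \<ge> 0" unfolding I_def by (rule integral_nonneg) (auto intro: ic c\<beta> \<beta>0)
  define Z where "Z = 1 + c * I"
  have Z0: "Z > 0" using c0 I0 by (simp add: Z_def add_pos_nonneg)
  define \<rho> where "\<rho> = (\<lambda>s. (e s + c * \<beta> s) / Z)"
  have \<rho>0: "0 < \<rho> s" for s using e0[of s] \<beta>0[of s] c0 Z0 by (simp add: \<rho>_def add_pos_nonneg)
  have \<rho>B: "\<rho> s \<le> ((1 + c * B) / Z) * e s" for s
  proof -
    have "e s + c * \<beta> s \<le> e s + c * (B * e s)" using \<beta>B[of s] c0 by simp
    then show ?thesis using Z0 by (simp add: \<rho>_def divide_right_mono algebra_simps)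
  qed
  have c\<rho>: "continuous_on S \<rho>" for S unfolding \<rho>_def by (intro continuous_intros ce c\<beta>) (use Z0 in auto)
  have adm: "admissible_density \<rho>"
  proof -
    define P where "P = (\<lambda>s. (e s + c * (I - integral {0..s} \<beta>)) / Z)"
    have "P 0 = 1" using Z0 by (simp add: P_def e_def Z_def)
    moreover have "(P has_real_derivative - \<rho> s) (at s within {0..})" if "s \<ge> 0" for s
    proof -
      have d1: "((\<lambda>u. integral {0..u} \<beta>) has_real_derivative \<beta> s) (at s within {0..s+1})"
        by (rule integral_has_real_derivative) (use that in \<open>auto intro: c\<beta>\<close>)
      have "at s within {0..s+1} = at s within {0..}"
        by (rule at_within_nhd[of s "{..<s+1}"]) auto
      with d1 have d2: "((\<lambda>u. integral {0..u} \<beta>) has_real_derivative \<beta> s) (at s within {0..})" by simp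
      show ?thesis unfolding P_def \<rho>_def e_def
        using Z0 by (auto intro!: derivative_eq_intros d2 simp: field_simps power2_eq_square)
    qed
    moreover have "(P \<longlongrightarrow> 0) at_top"
    proof -
      have ev: "\<forall>\<^sub>F s in at_top. e s / Z = P s"
      proof (rule eventually_at_top_linorderI[of "b + r"])
        fix s assume s: "b + r \<le> s"
        have "integral {0..b + r} \<beta> + integral {b + r..s} \<beta> = integral {0..s} \<beta>"
          using Henstock_Kurzweil_Integration.integral_combine[of 0 "b + r" s \<beta>] s r a ic[OF c\<beta>] by auto
        moreover have "integral {b + r..s} \<beta> = integral {b + r..s} (\<lambda>_. 0::real)"
          by (rule integral_cong) (simp add: \<beta>z2)
        ultimately have "integral {0..s} \<beta> = I" by (simp add: I_def)
        then show "e s / Z = P s" by (simp add: P_def)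
      qed
      have "((\<lambda>s. exp (- s)) \<longlongrightarrow> (0::real)) at_top"
        using filterlim_compose[OF exp_at_bot filterlim_uminus_at_bot_at_top] by simp
      then have "((\<lambda>s. e s / Z) \<longlongrightarrow> 0) at_top" unfolding e_def by (rule tendsto_divide_zero)
      then show ?thesis using ev by (rule Lim_transform_eventually)
    qed
    ultimately show ?thesis unfolding admissible_density_def using \<rho>0 by blast
  qed
  have fe1: "(\<lambda>s. \<phi> s * \<rho> s * gbmM \<phi> a 0 s) = (\<lambda>s. (\<phi> s * e s * E s + c * (\<phi> s * \<beta> s * E s)) / Z)"
    using Z0 by (auto simp: \<rho>_def E_def field_simps)
  have fe2: "(\<lambda>s. \<rho> s * gbmM \<phi> a 0 s) = (\<lambda>s. (e s * E s + c * (\<beta> s * E s)) / Z)"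
    using Z0 by (auto simp: \<rho>_def E_def field_simps)
  have wd: "model_wd \<phi> \<rho> a 0"
    unfolding model_wd_def
  proof
    show "(\<lambda>s. \<rho> s * gbmM \<phi> a 0 s) absolutely_integrable_on {a..}"
    proof (rule L1)
      show "continuous_on {a..} (\<lambda>s. \<rho> s * gbmM \<phi> a 0 s)"
        using cE[OF sub(1)[OF a0(1)]] unfolding E_def by (intro continuous_intros c\<rho>)
      fix s have "\<bar>\<rho> s * gbmM \<phi> a 0 s\<bar> = \<rho> s * E s" using \<rho>0[of s] En[of s] by (simp add: E_def abs_mult)
      also have "\<dots> \<le> \<rho> s" using \<rho>0[of s] E[of s] by (simp add: mult_left_le)
      also have "\<dots> \<le> ((1 + c * B) / Z) * exp (- s)" using \<rho>B[of s] by (simp add: e_def)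
      finally show "\<bar>\<rho> s * gbmM \<phi> a 0 s\<bar> \<le> ((1 + c * B) / Z) * exp (- s)" .
    qed
    show "(\<lambda>s. \<phi> s * \<rho> s * gbmM \<phi> a 0 s) absolutely_integrable_on {a..}"
    proof (rule L1)
      show "continuous_on {a..} (\<lambda>s. \<phi> s * \<rho> s * gbmM \<phi> a 0 s)"
        using cE[OF sub(1)[OF a0(1)]] unfolding E_def by (intro continuous_intros c\<rho> c\<phi> sub a0)
      fix s have "\<bar>\<phi> s * \<rho> s * gbmM \<phi> a 0 s\<bar> = \<rho> s * (\<bar>\<phi> s\<bar> * E s)" using \<rho>0[of s] En[of s] by (simp add: E_def abs_mult)
      also have "\<dots> \<le> \<rho> s * C" using \<rho>0[of s] E[of s] by (intro mult_left_mono) auto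
      also have "\<dots> \<le> ((1 + c * B) / Z) * exp (- s) * C" using \<rho>B[of s] C0 unfolding e_def by (intro mult_right_mono) auto
      finally show "\<bar>\<phi> s * \<rho> s * gbmM \<phi> a 0 s\<bar> \<le> (C * ((1 + c * B) / Z)) * exp (- s)" by (simp add: algebra_simps)
    qed
  qed
  have z1: "integral {a..T} (\<lambda>s. \<phi> s * \<beta> s * E s) = 0"
  proof -
    have "integral {a..T} (\<lambda>s. \<phi> s * \<beta> s * E s) = integral {a..T} (\<lambda>_. 0::real)"
      by (rule integral_cong) (simp add: \<beta>z)
    then show ?thesis by simp
  qed
  have z2: "integral {a..T} (\<lambda>s. \<beta> s * E s) = 0"
  proof -
    have "integral {a..T} (\<lambda>s. \<beta> s * E s) = integral {a..T} (\<lambda>_. 0::real)"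
      by (rule integral_cong) (simp add: \<beta>z)
    then show ?thesis by simp
  qed
  have aT: "a \<le> T" using a by simp
  have Na: "integral {a..} (\<lambda>s. \<phi> s * \<rho> s * gbmM \<phi> a 0 s) = (X1 + X2 + c * Pb) / Z"
    unfolding fe1
    by (subst lin_int) (auto simp: split_int[OF aT] j1 i1 i3 a0 z1 X1_def X2_def Pb_def)
  have Da: "integral {a..} (\<lambda>s. \<rho> s * gbmM \<phi> a 0 s) = (Y1 + Y2 + c * Qb) / Z"
    unfolding fe2
    by (subst lin_int) (auto simp: split_int[OF aT] j1 i2 i4 a0 z2 Y1_def Y2_def Qb_def)
  have NT: "integral {T..} (\<lambda>s. \<phi> s * \<rho> s * gbmM \<phi> a 0 s) = (X2 + c * Pb) / Z"
    unfolding fe1 by (subst lin_int) (auto simp: i1 i3 a0 X2_def Pb_def)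
  have DT: "integral {T..} (\<lambda>s. \<rho> s * gbmM \<phi> a 0 s) = (Y2 + c * Qb) / Z"
    unfolding fe2 by (subst lin_int) (auto simp: i2 i4 a0 Y2_def Qb_def)
  define Aa where "Aa = (X1 + X2 + c * Pb) / (Y1 + Y2 + c * Qb)"
  define AT where "AT = (X2 + c * Pb) / (Y2 + c * Qb)"
  have PA: "PhiFH \<phi> \<rho> a 0 a = Aa" unfolding PhiFH_def Na Da Aa_def using Z0 by simp
  have PT: "PhiFH \<phi> \<rho> a 0 T = AT" unfolding PhiFH_def NT DT AT_def using Z0 by simp
  have DTp: "Y2 + c * Qb > 0" using Y2 c0 Qb by (simp add: add_nonneg_pos)
  have Dap: "Y1 + Y2 + c * Qb > 0" using Y1 DTp by linarith
  have Pb: "Pb = K + m * Qb" by (simp add: K_def)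
  have cPb: "c * Pb = c * K + c * m * Qb" by (simp add: Pb algebra_simps)
  have cmQ: "c * m * Qb \<ge> 0" using c0 m Qb by simp
  have NTm: "X2 + c * Pb > m * (Y2 + c * Qb)"
    using cPb cK abs_ge_self[of "m * Y2 - X2"] by (simp add: algebra_simps)
  have Nap: "X1 + X2 + c * Pb > 0"
    using cPb cK cmQ abs_ge_minus_self[of "X1 + X2"] abs_ge_zero[of "m * Y2 - X2"] by linarith
  have h1: "X1 * (Y2 + c * Qb) \<le> m * Y1 * (Y2 + c * Qb)" using X1Y1 DTp by (intro mult_right_mono) auto
  have h2: "m * (Y2 + c * Qb) * Y1 < (X2 + c * Pb) * Y1" using NTm Y1 by (intro mult_strict_right_mono) auto
  have cross: "(X1 + X2 + c * Pb) * (Y2 + c * Qb) < (X2 + c * Pb) * (Y1 + Y2 + c * Qb)"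
    using h1 h2 by (simp add: algebra_simps)
  have AaT: "Aa < AT" unfolding Aa_def AT_def using cross DTp Dap by (simp add: divide_less_eq less_divide_eq field_simps)
  have Aa0: "Aa > 0" unfolding Aa_def using Nap Dap by simp
  have "risk_premium \<phi> \<rho> a 0 T = - Aa * (AT - Aa)"
    by (simp add: risk_premium_def mpr_def bond_vol_def PA PT)
  also have "\<dots> < 0" using AaT Aa0 by (simp add: mult_pos_pos)
  finally have "risk_premium \<phi> \<rho> a 0 T < 0" .
  moreover have "risk_premium \<phi> \<rho> a 0 T > 0" using prem[OF adm a0(1) a(2) wd] .
  ultimately show False by simp
qed

lemma step2:
  fixes \<phi> :: "real \<Rightarrow> real"
  assumes cont: "continuous_on {0..} \<phi>"
    and prem: "\<And>\<rho> t T w. admissible_density \<rho> \<Longrightarrow> 0 \<le> t \<Longrightarrow> t < T \<Longrightarrow>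
                 model_wd \<phi> \<rho> t w \<Longrightarrow> risk_premium \<phi> \<rho> t w T > 0"
    and pos: "\<forall>t\<ge>0. \<phi> t > 0"
  shows "\<forall>s t. 0 \<le> s \<longrightarrow> s \<le> t \<longrightarrow> \<phi> t \<le> \<phi> s"
proof (intro allI impI, rule ccontr)
  fix s0 t0 :: real
  assume s0: "0 \<le> s0" "s0 \<le> t0" and "\<not> \<phi> t0 \<le> \<phi> s0"
  then have lt: "\<phi> s0 < \<phi> t0" by simp
  then have st: "s0 < t0" using s0 by (cases "s0 = t0") auto
  define m where "m = (\<phi> s0 + \<phi> t0) / 2"
  have m: "0 < m" "\<phi> s0 < m" "m < \<phi> t0" using pos s0 st lt by (auto simp: m_def)
  have s00: "s0 \<in> {0..}" using s0 by simp
  obtain \<delta> where \<delta>: "\<delta> > 0" "\<And>x. x \<in> {0..} \<Longrightarrow> dist x s0 < \<delta> \<Longrightarrow> dist (\<phi> x) (\<phi> s0) < m - \<phi> s0"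
    using cont[unfolded continuous_on_iff, rule_format, OF s00, of "m - \<phi> s0"] m by auto
  define d where "d = min (\<delta>/2) ((t0 - s0)/2)"
  have d1: "d \<le> \<delta>/2" "d \<le> (t0 - s0)/2" unfolding d_def by (rule min.cobounded1, rule min.cobounded2)
  have d0: "0 < d" using \<delta>(1) st unfolding d_def by simp
  show False
  proof (rule core[OF cont prem, of "s0 + d/2" "s0 + d" t0 m])
    show "0 < s0 + d/2" "s0 + d/2 < s0 + d" "s0 + d < t0" using d0 d1 s0 st by auto
    show "0 < m" "m < \<phi> t0" using m by auto
    fix x assume x: "s0 + d/2 \<le> x" "x \<le> s0 + d"
    then have "x \<in> {0..}" "dist x s0 < \<delta>" using s0 d0 d1 \<delta>(1) by (auto simp: dist_real_def)
    then have "dist (\<phi> x) (\<phi> s0) < m - \<phi> s0" by (rule \<delta>(2))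
    then show "\<phi> x \<le> m" by (simp add: dist_real_def)
  qed
qed

lemma step1_pos:
  fixes \<phi> :: "real \<Rightarrow> real"
  assumes cont: "continuous_on {0..} \<phi>"
    and prem: "\<And>\<rho> t T w. admissible_density \<rho> \<Longrightarrow> 0 \<le> t \<Longrightarrow> t < T \<Longrightarrow>
                 model_wd \<phi> \<rho> t w \<Longrightarrow> risk_premium \<phi> \<rho> t w T > 0"
    and x0: "0 \<le> x0" "\<phi> x0 = 0" and b: "x0 < b" "\<phi> b > 0"
  shows False
proof -
  define m where "m = \<phi> b / 2"
  have m: "0 < m" "m < \<phi> b" using b by (auto simp: m_def)
  have x00: "x0 \<in> {0..}" using x0 by simp
  obtain \<delta> where \<delta>: "\<delta> > 0" "\<And>x. x \<in> {0..} \<Longrightarrow> dist x x0 < \<delta> \<Longrightarrow> dist (\<phi> x) (\<phi> x0) < m"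
    using cont[unfolded continuous_on_iff, rule_format, OF x00, of m] m by auto
  define d where "d = min (\<delta>/2) ((b - x0)/2)"
  have d1: "d \<le> \<delta>/2" "d \<le> (b - x0)/2" unfolding d_def by (rule min.cobounded1, rule min.cobounded2)
  have d0: "0 < d" using \<delta>(1) b unfolding d_def by simp
  show False
  proof (rule core[OF cont prem, of "x0 + d/2" "x0 + d" b m])
    show "0 < x0 + d/2" "x0 + d/2 < x0 + d" "x0 + d < b" using d0 d1 x0 b by auto
    show "0 < m" "m < \<phi> b" using m by auto
    fix x assume x: "x0 + d/2 \<le> x" "x \<le> x0 + d"
    then have "x \<in> {0..}" "dist x x0 < \<delta>" using x0 d0 d1 \<delta>(1) by (auto simp: dist_real_def)
    then have "dist (\<phi> x) (\<phi> x0) < m" by (rule \<delta>(2))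
    then show "\<phi> x \<le> m" using x0 by (simp add: dist_real_def)
  qed
qed

lemma step1_zero:
  fixes \<phi> :: "real \<Rightarrow> real"
  assumes cont: "continuous_on {0..} \<phi>"
    and prem: "\<And>\<rho> t T w. admissible_density \<rho> \<Longrightarrow> 0 \<le> t \<Longrightarrow> t < T \<Longrightarrow>
                 model_wd \<phi> \<rho> t w \<Longrightarrow> risk_premium \<phi> \<rho> t w T > 0"
    and x0: "0 \<le> x0" and z: "\<And>b. x0 \<le> b \<Longrightarrow> \<phi> b = 0"
  shows False
proof -
  define a where "a = x0 + 1"
  define \<rho> where "\<rho> = (\<lambda>s::real. exp (- s))"
  have adm: "admissible_density \<rho>"
    unfolding admissible_density_def
  proof (intro exI[of _ \<rho>] conjI allI impI)
    show "\<rho> 0 = 1" by (simp add: \<rho>_def)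
    fix s :: real
    show "(\<rho> has_real_derivative - \<rho> s) (at s within {0..})"
      unfolding \<rho>_def by (auto intro!: derivative_eq_intros)
    show "0 < \<rho> s" by (simp add: \<rho>_def)
  next
    show "(\<rho> \<longlongrightarrow> 0) at_top"
      using filterlim_compose[OF exp_at_bot filterlim_uminus_at_bot_at_top] by (simp add: \<rho>_def)
  qed
  have a0: "0 \<le> a" using x0 by (simp add: a_def)
  have a0': "0 < a" using x0 by (simp add: a_def)
  have ca: "continuous_on {a..} \<phi>" by (rule continuous_on_subset[OF cont]) (use a0 in auto)
  have wd: "model_wd \<phi> \<rho> a 0"
    unfolding model_wd_def
  proof
    show "(\<lambda>s. \<rho> s * gbmM \<phi> a 0 s) absolutely_integrable_on {a..}"
    proof (rule L1)
      show "continuous_on {a..} (\<lambda>s. \<rho> s * gbmM \<phi> a 0 s)"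
        using cont_gbm[OF ca] unfolding \<rho>_def by (intro continuous_intros) auto
      fix s show "\<bar>\<rho> s * gbmM \<phi> a 0 s\<bar> \<le> 1 * exp (- s)"
        using gbm_bounds[of a \<phi> s] a0' by (simp add: \<rho>_def abs_mult)
    qed
    show "(\<lambda>s. \<phi> s * \<rho> s * gbmM \<phi> a 0 s) absolutely_integrable_on {a..}"
    proof (rule L1)
      show "continuous_on {a..} (\<lambda>s. \<phi> s * \<rho> s * gbmM \<phi> a 0 s)"
        using cont_gbm[OF ca] ca unfolding \<rho>_def by (intro continuous_intros) auto
      fix s assume "a \<le> s"
      then have "\<phi> s = 0" using z by (simp add: a_def)
      then show "\<bar>\<phi> s * \<rho> s * gbmM \<phi> a 0 s\<bar> \<le> 0 * exp (- s)" by simp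
    qed
  qed
  have "integral {a..} (\<lambda>s. \<phi> s * \<rho> s * gbmM \<phi> a 0 s) = integral {a..} (\<lambda>_. 0::real)"
    by (rule integral_cong) (use z in \<open>simp add: a_def\<close>)
  then have "PhiFH \<phi> \<rho> a 0 a = 0" by (simp add: PhiFH_def)
  then have "risk_premium \<phi> \<rho> a 0 (a + 1) = 0" by (simp add: risk_premium_def mpr_def)
  moreover have "risk_premium \<phi> \<rho> a 0 (a + 1) > 0" by (rule prem[OF adm a0 _ wd]) simp
  ultimately show False by simp
qed

lemma nonzero:
  fixes \<phi> :: "real \<Rightarrow> real"
  assumes cont: "continuous_on {0..} \<phi>"
    and prem: "\<And>\<rho> t T w. admissible_density \<rho> \<Longrightarrow> 0 \<le> t \<Longrightarrow> t < T \<Longrightarrow>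
                 model_wd \<phi> \<rho> t w \<Longrightarrow> risk_premium \<phi> \<rho> t w T > 0"
    and x0: "0 \<le> x0"
  shows "\<phi> x0 \<noteq> 0"
proof
  assume z: "\<phi> x0 = 0"
  show False
  proof (cases "\<exists>b. x0 < b \<and> \<phi> b \<noteq> 0")
    case True
    then obtain b where b: "x0 < b" "\<phi> b \<noteq> 0" by auto
    show False
    proof (cases "\<phi> b > 0")
      case True
      then show False using step1_pos[OF cont prem x0 z b(1)] by blast
    next
      case False
      then have nb: "(\<lambda>s. - \<phi> s) b > 0" using b by simp
      have c': "continuous_on {0..} (\<lambda>s. - \<phi> s)" using cont by (intro continuous_intros)
      have z': "(\<lambda>s. - \<phi> s) x0 = 0" using z by simp
      show False using step1_pos[OF c' prem_neg[OF prem] x0 z' b(1) nb] by blast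
    qed
  next
    case False
    then have "\<And>b. x0 \<le> b \<Longrightarrow> \<phi> b = 0" using z by (metis order_le_less)
    then show False using step1_zero[OF cont prem x0] by blast
  qed
qed

theorem proposition3:
  fixes \<phi> :: "real \<Rightarrow> real"
  assumes cont: "continuous_on {0..} \<phi>"
    and prem: "\<And>\<rho> t T w. admissible_density \<rho> \<Longrightarrow> 0 \<le> t \<Longrightarrow> t < T \<Longrightarrow>
                 model_wd \<phi> \<rho> t w \<Longrightarrow> risk_premium \<phi> \<rho> t w T > 0"
  shows "((\<forall>t\<ge>0. \<phi> t > 0) \<and> (\<forall>s t. 0 \<le> s \<longrightarrow> s \<le> t \<longrightarrow> \<phi> t \<le> \<phi> s))
       \<or> ((\<forall>t\<ge>0. \<phi> t < 0) \<and> (\<forall>s t. 0 \<le> s \<longrightarrow> s \<le> t \<longrightarrow> \<phi> s \<le> \<phi> t))"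
proof -
  have nz: "\<And>x. 0 \<le> x \<Longrightarrow> \<phi> x \<noteq> 0" using nonzero[OF cont prem] by blast
  have sign: "(\<forall>t\<ge>0. \<phi> t > 0) \<or> (\<forall>t\<ge>0. \<phi> t < 0)"
  proof (rule ccontr)
    assume "\<not> ?thesis"
    then obtain x y where xy: "0 \<le> x" "\<phi> x \<le> 0" "0 \<le> y" "\<phi> y \<ge> 0" by (auto simp: not_less)
    have cxy: "continuous_on {min x y..max x y} \<phi>" by (rule continuous_on_subset[OF cont]) (use xy in auto)
    have "\<exists>z. min x y \<le> z \<and> z \<le> max x y \<and> \<phi> z = 0"
    proof (cases "x \<le> y")
      case True
      then show ?thesis using IVT'[of \<phi> x 0 y] xy cxy by (auto simp: min_def max_def)
    next
      case False
      then show ?thesis using IVT2'[of \<phi> x 0 y] xy cxy by (auto simp: min_def max_def)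
    qed
    then obtain z where "min x y \<le> z" "\<phi> z = 0" by blast
    then show False using nz[of z] xy by auto
  qed
  then show ?thesis
  proof
    assume p: "\<forall>t\<ge>0. \<phi> t > 0"
    then show ?thesis using step2[OF cont prem p] by blast
  next
    assume n: "\<forall>t\<ge>0. \<phi> t < 0"
    have c': "continuous_on {0..} (\<lambda>s. - \<phi> s)" using cont by (intro continuous_intros)
    have "\<forall>t\<ge>0. (\<lambda>s. - \<phi> s) t > 0" using n by simp
    from step2[OF c' prem_neg[OF prem] this] have "\<forall>s t. 0 \<le> s \<longrightarrow> s \<le> t \<longrightarrow> \<phi> s \<le> \<phi> t" by simp
    then show ?thesis using n by blast
  qed
qed

end
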